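(* For nonnegative integers $a_1$: $G(a_1,0,0)=0$ if $a_1$ is odd and $G(a_1,0,0)=1$ if $a_1$ is even; $G(a_1,0,a_1)=1$ for all $a_1$; $G(a_1,1,0)=a_1/2$ for even $a_1$; and $G(a_1,2,0)=\big((a_1+1)/2\big)^2$ for odd $a_1$.
   Context: For integers $a_1,a_2,s$ with $a=a_1+a_2$, $G(a_1,a_2,s)=\sum_m N_m$, the sum over integers $m$ such that $a_1-m,\ a_2-(s-m),\ m,\ s-m$ are all nonnegative (an empty sum is $0$), where $N_m$ is the number of permutations $\pi$ of $[a]$ that are decreasing within each of four consecutive blocks of positions of lengths $a_1-m,\ a_2-(s-m),\ m,\ s-m$ (in this order; arbitrary between blocks), and have no fixed point ($\pi_i=i$) in the first two blocks. *)

theory Defs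
  imports "HOL-Combinatorics.Permutations"
begin

definition dec_on :: "(nat \<Rightarrow> nat) \<Rightarrow> nat set \<Rightarrow> bool" where
  "dec_on p B = (\<forall>i\<in>B. \<forall>j\<in>B. i < j \<longrightarrow> p j < p i)"

definition Nblocks :: "nat \<Rightarrow> nat \<Rightarrow> nat \<Rightarrow> nat \<Rightarrow> nat" where
  "Nblocks l1 l2 l3 l4 = card {p. p permutes {1..l1+l2+l3+l4}
      \<and> dec_on p {1..l1}
      \<and> dec_on p {l1+1..l1+l2}
      \<and> dec_on p {l1+l2+1..l1+l2+l3}
      \<and> dec_on p {l1+l2+l3+1..l1+l2+l3+l4}
      \<and> (\<forall>i\<in>{1..l1+l2}. p i \<noteq> i)}"

definition G :: "int \<Rightarrow> int \<Rightarrow> int \<Rightarrow> int" where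
  "G a1 a2 s = (\<Sum>m\<in>{m::int. 0 \<le> a1 - m \<and> 0 \<le> a2 - (s - m) \<and> 0 \<le> m \<and> 0 \<le> s - m}.
      int (Nblocks (nat (a1 - m)) (nat (a2 - (s - m))) (nat m) (nat (s - m))))"

end

theory Submission imports Defs begin

lemma mk_permutes:
  assumes "finite S" "inj_on p S" "p ` S \<subseteq> S" "\<And>x. x \<notin> S \<Longrightarrow> p x = x"
  shows "p permutes S"
  using assms by (intro bij_imp_permutes) (auto simp: bij_betw_def endo_inj_surj)

lemma dec_on_empty[simp]: "dec_on p {}" by (simp add: dec_on_def)


lemma keyL:
  assumes perm: "p permutes {1..n}" and dec: "dec_on p {1..k}" and kn: "k \<le> n" and i: "i \<in> {1..k}"
  shows "n - p i = (i - 1) + card {j\<in>{k+1..n}. p i < p j}"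
proof -
  have bij: "bij_betw p {1..n} {1..n}" using perm permutes_imp_bij by blast
  have inj: "inj_on p {1..n}" using bij_betw_imp_inj_on[OF bij] .
  have surj: "p ` {1..n} = {1..n}" using bij_betw_imp_surj_on[OF bij] .
  have pi: "p i \<in> {1..n}" using i kn permutes_in_image[OF perm, of i] by simp
  have f1: "{v\<in>{1..n}. p i < v} = p ` {j\<in>{1..n}. p i < p j}"
  proof
    show "{v\<in>{1..n}. p i < v} \<subseteq> p ` {j\<in>{1..n}. p i < p j}"
    proof
      fix v assume v: "v \<in> {v\<in>{1..n}. p i < v}"
      then have "v \<in> p ` {1..n}" using surj by simp
      then obtain j where "j \<in> {1..n}" "v = p j" by blast
      then show "v \<in> p ` {j\<in>{1..n}. p i < p j}" using v by blast
    qed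
    show "p ` {j\<in>{1..n}. p i < p j} \<subseteq> {v\<in>{1..n}. p i < v}"
      using surj by blast
  qed
  have f2: "card (p ` {j\<in>{1..n}. p i < p j}) = card {j\<in>{1..n}. p i < p j}"
    by (rule card_image, rule inj_on_subset[OF inj]) blast
  have f3: "{v\<in>{1..n}. p i < v} = {p i + 1..n}" using pi by auto
  have f4: "{j\<in>{1..n}. p i < p j} = {1..<i} \<union> {j\<in>{k+1..n}. p i < p j}"
  proof -
    have lt: "\<And>j. j \<in> {1..k} \<Longrightarrow> j < i \<Longrightarrow> p i < p j"
      using dec i unfolding dec_on_def by blast
    have ge: "\<And>j. j \<in> {1..k} \<Longrightarrow> i \<le> j \<Longrightarrow> \<not> p i < p j"
    proof -
      fix j assume j: "j \<in> {1..k}" "i \<le> j"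
      show "\<not> p i < p j"
      proof (cases "i = j")
        case False
        then have "i < j" using j by simp
        then have "p j < p i" using dec i j unfolding dec_on_def by blast
        then show ?thesis by simp
      qed simp
    qed
    show ?thesis
    proof
      show "{j\<in>{1..n}. p i < p j} \<subseteq> {1..<i} \<union> {j\<in>{k+1..n}. p i < p j}"
      proof
        fix j assume j: "j \<in> {j\<in>{1..n}. p i < p j}"
        show "j \<in> {1..<i} \<union> {j\<in>{k+1..n}. p i < p j}"
        proof (cases "j \<le> k")
          case True
          have "j < i"
          proof (rule ccontr)
            assume "\<not> j < i"
            then have "i \<le> j" by simp
            moreover have "j \<in> {1..k}" using j True by simp
            ultimately show False using ge[of j] j by simp
          qed
          then show ?thesis using j by simp
        next
          case False then show ?thesis using j by simp
        qed
      qed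
      show "{1..<i} \<union> {j\<in>{k+1..n}. p i < p j} \<subseteq> {j\<in>{1..n}. p i < p j}"
      proof
        fix j assume j: "j \<in> {1..<i} \<union> {j\<in>{k+1..n}. p i < p j}"
        show "j \<in> {j\<in>{1..n}. p i < p j}"
        proof (cases "j < i")
          case True
          then have "j \<in> {1..k}" using j i by auto
          then show ?thesis using lt True i kn j by auto
        next
          case False then show ?thesis using j by auto
        qed
      qed
    qed
  qed
  have f5: "card ({1..<i} \<union> {j\<in>{k+1..n}. p i < p j}) = (i - 1) + card {j\<in>{k+1..n}. p i < p j}"
  proof -
    have "{1..<i} \<inter> {j\<in>{k+1..n}. p i < p j} = {}" using i by auto
    then show ?thesis by (simp add: card_Un_disjoint)
  qed
  have "n - p i = card {p i + 1..n}" by simp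
  also have "\<dots> = card (p ` {j\<in>{1..n}. p i < p j})" unfolding f3[symmetric] f1 ..
  also have "\<dots> = card {j\<in>{1..n}. p i < p j}" by (rule f2)
  also have "\<dots> = (i - 1) + card {j\<in>{k+1..n}. p i < p j}" unfolding f4 by (rule f5)
  finally show ?thesis .
qed

definition rv :: "nat \<Rightarrow> nat \<Rightarrow> nat" where
  "rv n i = (if i \<in> {1..n} then n + 1 - i else i)"

lemma rv_unique:
  assumes "p permutes {1..n}" "dec_on p {1..n}"
  shows "p = rv n"
proof
  fix i show "p i = rv n i"
  proof (cases "i \<in> {1..n}")
    case True
    have "n - p i = i - 1" using keyL[OF assms le_refl True] by simp
    moreover have "p i \<in> {1..n}" using True permutes_in_image[OF assms(1)] by auto
    ultimately show ?thesis using True by (auto simp: rv_def)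
  next
    case False then show ?thesis using permutes_not_in[OF assms(1) False] by (auto simp: rv_def)
  qed
qed

lemma rv_ok: "rv n permutes {1..n}" "dec_on (rv n) {1..n}"
proof -
  show "rv n permutes {1..n}"
    by (rule mk_permutes) (auto simp: rv_def inj_on_def)
  show "dec_on (rv n) {1..n}" by (auto simp: rv_def dec_on_def)
qed



definition c1 :: "nat \<Rightarrow> nat \<Rightarrow> nat \<Rightarrow> nat" where
  "c1 k x i = (if i \<in> {1..k} then (if i + x \<le> k+1 then k+2-i else k+1-i) else if i = k+1 then x else i)"

lemma card_single_filter: "card {j\<in>{a..(a::nat)}. P j} = (if P a then 1 else 0)"
proof -
  have "{j\<in>{a..a}. P j} = (if P a then {a} else {})" by auto
  then show ?thesis by simp
qed

lemma caseC:
  assumes k: "k = 2*h"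
  shows "{p. p permutes {1..k+1} \<and> dec_on p {1..k} \<and> dec_on p {k+1..k+1}
      \<and> (\<forall>i\<in>{1..k+1}. p i \<noteq> i)} = c1 k ` {h+1..k}" (is "?S = ?R")
proof
  show "?S \<subseteq> ?R"
  proof
    fix p assume "p \<in> ?S"
    then have perm: "p permutes {1..k+1}" and dec: "dec_on p {1..k}" and der: "\<forall>i\<in>{1..k+1}. p i \<noteq> i" by auto
    define x where "x = p (k+1)"
    have inj: "inj_on p {1..k+1}" using perm permutes_inj_on by blast
    have xr: "x \<in> {1..k+1}" using permutes_in_image[OF perm] x_def by auto
    have xn: "x \<noteq> k+1" using der x_def by auto
    have pc: "p = c1 k x"
    proof
      fix i show "p i = c1 k x i"
      proof (cases "i \<in> {1..k}")
        case True
        have e: "k + 1 - p i = (i - 1) + (if p i < x then 1 else 0)"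
          using keyL[OF perm dec _ True] card_single_filter[of "k+1" "\<lambda>j. p i < p j"] x_def by simp
        have ne: "p i \<noteq> x" using inj True x_def unfolding inj_on_def by force
        have pr: "p i \<in> {1..k+1}" using True permutes_in_image[OF perm] by auto
        show ?thesis using True e ne pr xr unfolding c1_def by (auto split: if_splits)
      next
        case False
        then show ?thesis using permutes_not_in[OF perm] x_def unfolding c1_def
          by (cases "i = k+1") auto
      qed
    qed
    have "x \<ge> h+1"
    proof (rule ccontr)
      assume "\<not> x \<ge> h+1"
      moreover have "h \<ge> 1" using xr xn k by auto
      ultimately have "c1 k x (h+1) = h+1" using k xr unfolding c1_def by auto
      then show False using der pc \<open>h \<ge> 1\<close> k by auto
    qed
    then show "p \<in> ?R" using pc xr xn by auto
  qed
next
  show "?R \<subseteq> ?S"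
  proof
    fix p assume "p \<in> ?R"
    then obtain x where x: "x \<in> {h+1..k}" and p: "p = c1 k x" by auto
    have "p permutes {1..k+1}"
    proof (rule mk_permutes)
      show "inj_on p {1..k+1}" unfolding p inj_on_def c1_def using x by (auto split: if_splits)
      show "p ` {1..k+1} \<subseteq> {1..k+1}" unfolding p c1_def using x by auto
      show "\<And>y. y \<notin> {1..k+1} \<Longrightarrow> p y = y" unfolding p c1_def by auto
    qed simp
    moreover have "dec_on p {1..k}" unfolding p c1_def dec_on_def by auto
    moreover have "dec_on p {k+1..k+1}" unfolding dec_on_def by auto
    moreover have "\<forall>i\<in>{1..k+1}. p i \<noteq> i" unfolding p c1_def using x k by (auto; presburger)
    ultimately show "p \<in> ?S" by auto
  qed
qed



definition c2 :: "nat \<Rightarrow> nat \<Rightarrow> nat \<Rightarrow> nat \<Rightarrow> nat" where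
  "c2 k x y i = (if i \<in> {1..k} then (if i + x \<le> k+2 then k+3-i else if i + y \<le> k+1 then k+2-i else k+1-i)
     else if i = k+1 then x else if i = k+2 then y else i)"

lemma card_two_filter: "card {j\<in>{a..(a::nat)+1}. P j} = (if P a then 1 else 0) + (if P (a+1) then 1 else 0)"
proof -
  have "{a..a+1} = {a, a+1}" by auto
  then have "{j\<in>{a..a+1}. P j} = (if P a then {a} else {}) \<union> (if P (a+1) then {a+1} else {})" by auto
  then show ?thesis by simp
qed

lemma caseD:
  assumes k: "k + 1 = 2*h"
  shows "{p. p permutes {1..k+2} \<and> dec_on p {1..k} \<and> dec_on p {k+1..k+2}
      \<and> (\<forall>i\<in>{1..k+2}. p i \<noteq> i)} = (\<lambda>(x,y). c2 k x y) ` (({h+1..k+2} - {k+1}) \<times> {1..h})" (is "?S = ?R")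
proof
  show "?S \<subseteq> ?R"
  proof
    fix p assume "p \<in> ?S"
    then have perm: "p permutes {1..k+2}" and dec: "dec_on p {1..k}" and dec2: "dec_on p {k+1..k+2}"
      and der: "\<forall>i\<in>{1..k+2}. p i \<noteq> i" by auto
    define x where "x = p (k+1)"
    define y where "y = p (k+2)"
    have inj: "inj_on p {1..k+2}" using perm permutes_inj_on by blast
    have xr: "x \<in> {1..k+2}" using permutes_in_image[OF perm] x_def by auto
    have yr: "y \<in> {1..k+2}" using permutes_in_image[OF perm] y_def by auto
    have xn: "x \<noteq> k+1" using der x_def by auto
    have yx: "y < x" using dec2 x_def y_def unfolding dec_on_def by auto
    have pc: "p = c2 k x y"
    proof
      fix i show "p i = c2 k x y i"
      proof (cases "i \<in> {1..k}")
        case True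
        have "k + 2 - p i = (i - 1) + card {j\<in>{k+1..k+1+1}. p i < p j}"
          using keyL[OF perm dec _ True] by (simp add: add.assoc)
        then have e: "k + 2 - p i = (i - 1) + (if p i < x then 1 else 0) + (if p i < y then 1 else 0)"
          using card_two_filter[of "k+1" "\<lambda>j. p i < p j"] x_def y_def by (simp add: add.assoc)
        have ne: "p i \<noteq> x" "p i \<noteq> y" using inj True x_def y_def unfolding inj_on_def by force+
        have pr: "p i \<in> {1..k+2}" using True permutes_in_image[OF perm] by auto
        show ?thesis using True e ne pr xr yr yx unfolding c2_def by (auto split: if_splits)
      next
        case False
        then show ?thesis using permutes_not_in[OF perm] x_def y_def unfolding c2_def
          by (cases "i = k+1"; cases "i = k+2") auto
      qed
    qed
    have "h \<ge> 1" using k by auto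
    have "x \<ge> h+1"
    proof (rule ccontr)
      assume a: "\<not> x \<ge> h+1"
      then have "h \<ge> 2" using yx yr by auto
      then have "c2 k x y (h+1) = h+1" using a k xr unfolding c2_def by auto
      then show False using der pc \<open>h \<ge> 2\<close> k by auto
    qed
    have "y \<le> h"
    proof (rule ccontr)
      assume a: "\<not> y \<le> h"
      then have "c2 k x y h = h" using a k yx \<open>h \<ge> 1\<close> unfolding c2_def by auto
      then show False using der pc \<open>h \<ge> 1\<close> k by auto
    qed
    then show "p \<in> ?R" using pc xr yr xn \<open>x \<ge> h+1\<close> by auto
  qed
next
  show "?R \<subseteq> ?S"
  proof
    fix p assume "p \<in> ?R"
    then obtain xy where xy: "xy \<in> ({h+1..k+2} - {k+1}) \<times> {1..h}" "p = (\<lambda>(x,y). c2 k x y) xy" by blast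
    obtain x y where "xy = (x,y)" by (cases xy)
    then have x: "x \<in> {h+1..k+2}" "x \<noteq> k+1" and y: "y \<in> {1..h}" and p: "p = c2 k x y" using xy by auto
    have "p permutes {1..k+2}"
    proof (rule mk_permutes)
      show "inj_on p {1..k+2}" unfolding p inj_on_def c2_def using x y k by (auto split: if_splits)
      show "p ` {1..k+2} \<subseteq> {1..k+2}" unfolding p c2_def using x y k by auto
      show "\<And>z. z \<notin> {1..k+2} \<Longrightarrow> p z = z" unfolding p c2_def by auto
    qed simp
    moreover have "dec_on p {1..k}" unfolding p c2_def dec_on_def by auto
    moreover have "dec_on p {k+1..k+2}" unfolding dec_on_def p c2_def using x y k
      by (auto simp: le_Suc_eq)
    moreover have "\<forall>i\<in>{1..k+2}. p i \<noteq> i" unfolding p c2_def using x y k by (auto; presburger)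
    ultimately show "p \<in> ?S" by auto
  qed
qed

lemma card_caseD:
  assumes k: "k + 1 = 2*h"
  shows "card ((\<lambda>(x,y). c2 k x y) ` (({h+1..k+2} - {k+1}) \<times> {1..h})) = h * h"
proof -
  have "inj_on (\<lambda>(x,y). c2 k x y) (({h+1..k+2} - {k+1}) \<times> {1..h})"
  proof (rule inj_onI)
    fix a b assume e: "(\<lambda>(x,y). c2 k x y) a = (\<lambda>(x,y). c2 k x y) b"
    obtain x y where a: "a = (x,y)" by (cases a)
    obtain x' y' where b: "b = (x',y')" by (cases b)
    have "c2 k x y = c2 k x' y'" using e a b by simp
    then have "c2 k x y (k+1) = c2 k x' y' (k+1)" "c2 k x y (k+2) = c2 k x' y' (k+2)" by auto
    then show "a = b" unfolding c2_def a b by auto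
  qed
  then have "card ((\<lambda>(x,y). c2 k x y) ` (({h+1..k+2} - {k+1}) \<times> {1..h})) = card ({h+1..k+2} - {k+1}) * h"
    by (simp add: card_image card_cartesian_product)
  moreover have "card ({h+1..k+2} - {k+1}) = h" using k by (subst card_Diff_singleton) auto
  ultimately show ?thesis by simp
qed



lemma rv_fix: "(\<exists>i\<in>{1..n}. rv n i = i) \<longleftrightarrow> odd n"
proof
  assume "\<exists>i\<in>{1..n}. rv n i = i"
  then obtain i where "i \<in> {1..n}" "n + 1 - i = i" by (auto simp: rv_def)
  then show "odd n" by presburger
next
  assume "odd n"
  then have "(n+1) div 2 \<in> {1..n}" "rv n ((n+1) div 2) = (n+1) div 2"
    by (auto simp: rv_def) presburger+
  then show "\<exists>i\<in>{1..n}. rv n i = i" by blast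
qed

lemma setA: "{p. p permutes {1..n} \<and> dec_on p {1..n} \<and> (\<forall>i\<in>{1..n}. p i \<noteq> i)}
   = (if even n then {rv n} else {})"
  using rv_unique rv_ok rv_fix[of n] by auto

lemma NA: "Nblocks n 0 0 0 = (if even n then 1 else 0)"
proof -
  have "Nblocks n 0 0 0 = card {p. p permutes {1..n} \<and> dec_on p {1..n} \<and> (\<forall>i\<in>{1..n}. p i \<noteq> i)}"
    unfolding Nblocks_def by simp
  then show ?thesis using setA by simp
qed

lemma NB: "Nblocks 0 0 n 0 = 1"
proof -
  have "Nblocks 0 0 n 0 = card {p. p permutes {1..n} \<and> dec_on p {1..n}}"
    unfolding Nblocks_def by simp
  also have "{p. p permutes {1..n} \<and> dec_on p {1..n}} = {rv n}" using rv_unique rv_ok by auto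
  finally show ?thesis by simp
qed

lemma NC: assumes "k = 2*h" shows "Nblocks k 1 0 0 = h"
proof -
  have "Nblocks k 1 0 0 = card {p. p permutes {1..k+1} \<and> dec_on p {1..k} \<and> dec_on p {k+1..k+1}
      \<and> (\<forall>i\<in>{1..k+1}. p i \<noteq> i)}"
    unfolding Nblocks_def by simp
  also have "\<dots> = card (c1 k ` {h+1..k})" using caseC[OF assms] by simp
  also have "\<dots> = card {h+1..k}"
  proof (rule card_image, rule inj_onI)
    fix x y assume "c1 k x = c1 k y"
    then have "c1 k x (k+1) = c1 k y (k+1)" by simp
    then show "x = y" by (simp add: c1_def)
  qed
  finally show ?thesis using assms by simp
qed

lemma ND: assumes "k + 1 = 2*h" shows "Nblocks k 2 0 0 = h * h"
proof -
  have "Nblocks k 2 0 0 = card {p. p permutes {1..k+2} \<and> dec_on p {1..k} \<and> dec_on p {k+1..k+2}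
      \<and> (\<forall>i\<in>{1..k+2}. p i \<noteq> i)}"
    unfolding Nblocks_def by (simp add: numeral_2_eq_2)
  then show ?thesis using caseD[OF assms] card_caseD[OF assms] by simp
qed

theorem mainTheorem13:
  fixes a1 :: int
  assumes "0 \<le> a1"
  shows "(odd a1 \<longrightarrow> G a1 0 0 = 0)
    \<and> (even a1 \<longrightarrow> G a1 0 0 = 1)
    \<and> G a1 0 a1 = 1
    \<and> (even a1 \<longrightarrow> 2 * G a1 1 0 = a1)
    \<and> (odd a1 \<longrightarrow> 4 * G a1 2 0 = (a1 + 1)^2)"
proof -
  define n where "n = nat a1"
  have a: "a1 = int n" using assms n_def by simp
  have g00: "G a1 0 0 = int (Nblocks n 0 0 0)"
  proof -
    have "{m::int. 0 \<le> a1 - m \<and> 0 \<le> 0 - (0 - m) \<and> 0 \<le> m \<and> 0 \<le> 0 - m} = {0}" using assms by auto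
    then show ?thesis unfolding G_def n_def by simp
  qed
  have g0a: "G a1 0 a1 = int (Nblocks 0 0 n 0)"
  proof -
    have "{m::int. 0 \<le> a1 - m \<and> 0 \<le> 0 - (a1 - m) \<and> 0 \<le> m \<and> 0 \<le> a1 - m} = {a1}" using assms by auto
    then show ?thesis unfolding G_def n_def by simp
  qed
  have g10: "G a1 1 0 = int (Nblocks n 1 0 0)"
  proof -
    have "{m::int. 0 \<le> a1 - m \<and> 0 \<le> 1 - (0 - m) \<and> 0 \<le> m \<and> 0 \<le> 0 - m} = {0}" using assms by auto
    then show ?thesis unfolding G_def n_def by simp
  qed
  have g20: "G a1 2 0 = int (Nblocks n 2 0 0)"
  proof -
    have "{m::int. 0 \<le> a1 - m \<and> 0 \<le> 2 - (0 - m) \<and> 0 \<le> m \<and> 0 \<le> 0 - m} = {0}" using assms by auto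
    then show ?thesis unfolding G_def n_def by simp
  qed
  have ev: "even a1 \<longleftrightarrow> even n" using a by simp
  show ?thesis
  proof (intro conjI impI)
    assume "odd a1" then show "G a1 0 0 = 0" using g00 NA ev by simp
  next
    assume "even a1" then show "G a1 0 0 = 1" using g00 NA ev by simp
  next
    show "G a1 0 a1 = 1" using g0a NB by simp
  next
    assume "even a1"
    then obtain h where "n = 2*h" using ev by (auto elim: evenE)
    then show "2 * G a1 1 0 = a1" using g10 NC a by simp
  next
    assume "odd a1"
    then obtain h where h: "n + 1 = 2*h" using ev by (metis odd_two_times_div_two_succ even_Suc Suc_eq_plus1 evenE)
    then have "4 * G a1 2 0 = 4 * int (h*h)" using g20 ND by simp
    also have "\<dots> = (a1 + 1)^2"
    proof -
      have "int (n + 1) = int (2 * h)" using h by simp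
      then have "a1 + 1 = 2 * int h" using a by simp
      then show ?thesis by (simp add: power2_eq_square)
    qed
    finally show "4 * G a1 2 0 = (a1 + 1)^2" .
  qed
qed


end
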